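(* For all $d,N\in\mathbb{N}$, $B_{d,2}(1,\dots,1)=1$, where $(1,\dots,1)\in\mathbb{N}^N$.
   Context: $T_{d,2}=\mathbb{R}\oplus\mathbb{R}^d\oplus\mathbb{R}^{d\times d}$ with truncated tensor product; $\mathfrak{g}_{d,2}$ is the smallest Lie subalgebra (commutator bracket) containing $e_1,\dots,e_d$; $\exp(\mathbf{z})=1+\mathbf{z}+\mathbf{z}^{\otimes2}/2$; $\mathcal{G}_{d,2}=\exp(\mathfrak{g}_{d,2})$ (a group), $\log=\exp^{-1}$. For $\mathbf{x}\in\mathcal{G}_{d,2}^N$, $\mathsf{bary}(\mathbf{x})$ is the unique $\mathbf{m}\in\mathcal{G}_{d,2}$ with $\sum_{i=1}^N\log(\mathbf{m}^{-1}\mathbf{x}_i)=0$. For a path $X:[0,1]\to\mathbb{R}^d$ its $2$-truncated signature is $\sigma(X)=1\oplus(X(1)-X(0))\oplus\big(\int_{0<t_1<t_2<1}\dot X_{w_1}(t_1)\dot X_{w_2}(t_2)\,dt_1dt_2\big)_{w_1,w_2}$. $\mathcal{L}^{\mathrm{im}}_{d,\le 2,m}$ is the set of $\sigma(X)$ for piecewise linear $X$ with $m$ segments, and $B_{d,2}(\alpha)=\min\{m\in\mathbb{N}:\mathsf{bary}(\mathcal{L}^{\mathrm{im}}_{d,\le 2,\alpha_1}\times\dots\times\mathcal{L}^{\mathrm{im}}_{d,\le 2,\alpha_N})\subseteq\mathcal{L}^{\mathrm{im}}_{d,\le 2,m}\}$. *)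

theory Defs
  imports "HOL-Analysis.Analysis"
begin

text \<open>Elements of the truncated tensor algebra T_{d,2} = R + R^d + R^{d x d},
  with R^d = real^'d (d = CARD('d)).\<close>
type_synonym 'd tens = "real \<times> (real^'d) \<times> (real^'d^'d)"

definition outer :: "real^'d \<Rightarrow> real^'d \<Rightarrow> real^'d^'d" where
  "outer a b = (\<chi> i j. a $ i * b $ j)"

definition tmul :: "('d::finite) tens \<Rightarrow> 'd tens \<Rightarrow> 'd tens" where
  "tmul x y = (case x of (a0, a1, a2) \<Rightarrow> case y of (b0, b1, b2) \<Rightarrow>
     (a0 * b0, a0 *\<^sub>R b1 + b0 *\<^sub>R a1, a0 *\<^sub>R b2 + b0 *\<^sub>R a2 + outer a1 b1))"

definition tone :: "('d::finite) tens" where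
  "tone = (1, 0, 0)"

definition tinv :: "('d::finite) tens \<Rightarrow> 'd tens" where
  "tinv x = (THE y. tmul x y = tone \<and> tmul y x = tone)"

definition comm :: "('d::finite) tens \<Rightarrow> 'd tens \<Rightarrow> 'd tens" where
  "comm x y = tmul x y - tmul y x"

definition basis_e :: "('d::finite) \<Rightarrow> 'd tens" where
  "basis_e i = (0, axis i 1, 0)"

definition lie_g :: "('d::finite) tens set" where
  "lie_g = \<Inter> {S. subspace S \<and> (\<forall>x\<in>S. \<forall>y\<in>S. comm x y \<in> S) \<and> (\<forall>i. basis_e i \<in> S)}"

definition texp :: "('d::finite) tens \<Rightarrow> 'd tens" where
  "texp z = tone + z + (1/2) *\<^sub>R tmul z z"

definition grp :: "('d::finite) tens set" where
  "grp = texp ` lie_g"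

definition tlog :: "('d::finite) tens \<Rightarrow> 'd tens" where
  "tlog = inv_into lie_g texp"

definition bary :: "nat \<Rightarrow> (nat \<Rightarrow> ('d::finite) tens) \<Rightarrow> 'd tens" where
  "bary N x = (THE m. m \<in> grp \<and> (\<Sum>i<N. tlog (tmul (tinv m) (x i))) = 0)"

definition sig :: "(real \<Rightarrow> real^('d::finite)) \<Rightarrow> 'd tens" where
  "sig X = (1, X 1 - X 0,
     \<chi> w1 w2. integral {p :: real \<times> real. 0 < fst p \<and> fst p < snd p \<and> snd p < 1}
        (\<lambda>p. vector_derivative X (at (fst p)) $ w1 * vector_derivative X (at (snd p)) $ w2))"

definition pl_path :: "nat \<Rightarrow> (real \<Rightarrow> real^'d) \<Rightarrow> bool" where
  "pl_path m X \<longleftrightarrow>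
     (m = 0 \<and> (\<forall>s\<in>{0..1}. X s = X 0)) \<or>
     (m > 0 \<and> (\<exists>t :: nat \<Rightarrow> real. t 0 = 0 \<and> t m = 1 \<and> (\<forall>k<m. t k \<le> t (Suc k)) \<and>
        (\<forall>k<m. \<exists>u v. \<forall>s\<in>{t k..t (Suc k)}. X s = u + s *\<^sub>R v)))"

definition Lim :: "nat \<Rightarrow> ('d::finite) tens set" where
  "Lim m = {sig X | X. pl_path m X}"

definition Bd2 :: "('d::finite) itself \<Rightarrow> nat \<Rightarrow> (nat \<Rightarrow> nat) \<Rightarrow> nat" where
  "Bd2 _ N \<alpha> = (LEAST m. {bary N x | x. \<forall>i<N. x i \<in> Lim (\<alpha> i)} \<subseteq> (Lim m :: ('d::finite) tens set))"

end

theory Submission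
  imports Defs
begin


lemma outer_nth[simp]: "outer a b $ i $ j = a $ i * b $ j"
  by (simp add: outer_def)

lemma tmul_simp: "tmul (a0,a1,a2) (b0,b1,b2) =
  (a0*b0, a0 *\<^sub>R b1 + b0 *\<^sub>R a1, a0 *\<^sub>R b2 + b0 *\<^sub>R a2 + outer a1 b1)"
  by (simp add: tmul_def)

lemma lie_g_subspace: "subspace (lie_g :: ('d::finite) tens set)"
  unfolding lie_g_def by (rule subspace_Inter) blast

lemma lie_g_comm: "x \<in> lie_g \<Longrightarrow> y \<in> lie_g \<Longrightarrow> comm x y \<in> lie_g"
  unfolding lie_g_def by blast

lemma lie_g_basis: "basis_e i \<in> lie_g"
  unfolding lie_g_def by blast

lemma lie_g_fst:
  assumes "x \<in> (lie_g :: ('d::finite) tens set)" shows "fst x = 0"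
proof -
  let ?S = "{x :: 'd tens. fst x = 0}"
  have "subspace ?S" by (auto simp: subspace_def)
  moreover have "\<forall>x\<in>?S. \<forall>y\<in>?S. comm x y \<in> ?S"
    by (auto simp: comm_def tmul_def split: prod.splits)
  moreover have "\<forall>i. basis_e i \<in> ?S" by (simp add: basis_e_def)
  ultimately have "lie_g \<subseteq> ?S" unfolding lie_g_def by blast
  then show ?thesis using assms by blast
qed

lemma vec_in: "(0::real, v, 0::real^'d^'d) \<in> (lie_g :: ('d::finite) tens set)"
proof -
  have "(0::real, v, 0::real^'d^'d) = (\<Sum>i\<in>UNIV. (v $ i) *\<^sub>R basis_e i)"
    by (simp add: prod_eq_iff fst_sum snd_sum basis_e_def vec_eq_iff axis_def
        if_distrib[of "\<lambda>x. _ * x"] cong: if_cong)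
  also have "\<dots> \<in> lie_g"
    by (intro subspace_sum[OF lie_g_subspace] subspace_scale[OF lie_g_subspace] lie_g_basis)
  finally show ?thesis .
qed

lemma texp0: "texp (0::real, a, A) = (1, a, A + (1/2) *\<^sub>R outer a a)"
  by (simp add: texp_def tmul_def tone_def)

lemma texp_inj: "inj_on texp (lie_g :: ('d::finite) tens set)"
proof
  fix x y :: "'d tens"
  assume x: "x \<in> lie_g" and y: "y \<in> lie_g" and e: "texp x = texp y"
  obtain a A where xa: "x = (0, a, A)" using lie_g_fst[OF x] by (cases x) auto
  obtain b B where yb: "y = (0, b, B)" using lie_g_fst[OF y] by (cases y) auto
  from e have "a = b" and "A + (1/2) *\<^sub>R outer a a = B + (1/2) *\<^sub>R outer b b"
    unfolding xa yb texp0 by auto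
  then show "x = y" using xa yb by simp
qed

lemma tlog_texp: "z \<in> lie_g \<Longrightarrow> tlog (texp z) = z"
  unfolding tlog_def by (rule inv_into_f_f[OF texp_inj])

lemma tinv_1: "tinv (1::real, a, B) = (1, -a, -B + outer a a)"
  unfolding tinv_def
proof (rule the_equality)
  show "tmul (1, a, B) (1, - a, - B + outer a a) = tone \<and> tmul (1, - a, - B + outer a a) (1, a, B) = tone"
    by (simp add: tmul_def tone_def vec_eq_iff algebra_simps)
next
  fix y assume h: "tmul (1, a, B) y = tone \<and> tmul y (1, a, B) = tone"
  obtain y0 y1 y2 where yy: "y = (y0, y1, y2)" by (cases y) auto
  from h have "y0 = 1" "y1 + y0 *\<^sub>R a = 0" "y2 + y0 *\<^sub>R B + outer a y1 = 0"
    unfolding yy tmul_simp tone_def by auto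
  then have "y0 = 1" "y1 = - a" "y2 = - B - outer a y1"
    by (auto simp: algebra_simps eq_neg_iff_add_eq_0)
  then show "y = (1, - a, - B + outer a a)"
    unfolding yy by (simp add: vec_eq_iff)
qed

lemma comm_E: "comm (0::real, a, 0::real^'d^'d) (0, b, 0) = (0, 0, outer a b - outer b a)"
  for a b :: "real^('d::finite)"
  by (simp add: comm_def tmul_def)

lemma key_mul:
  fixes c v :: "real^('d::finite)"
  shows "tmul (tinv (texp (0, c, C))) (texp (0, v, 0)) =
         texp (0, v - c, -C + (1/2) *\<^sub>R (outer v c - outer c v))"
  unfolding texp0 tinv_1 tmul_simp
  by (simp add: vec_eq_iff algebra_simps)

lemma key_in:
  fixes c v :: "real^('d::finite)"
  assumes "(0, c, C) \<in> lie_g"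
  shows "(0::real, v - c, -C + (1/2) *\<^sub>R (outer v c - outer c v)) \<in> lie_g"
proof -
  have "(0::real, v - c, -C + (1/2) *\<^sub>R (outer v c - outer c v)) =
        ((0, v, 0) - (0, c, C)) + (1/2) *\<^sub>R comm (0, v, 0) (0, c, 0)"
    by (simp add: comm_E)
  also have "\<dots> \<in> lie_g"
    by (intro subspace_add[OF lie_g_subspace] subspace_diff[OF lie_g_subspace]
        subspace_scale[OF lie_g_subspace] lie_g_comm vec_in assms)
  finally show ?thesis .
qed



lemma outer_sum_left: "outer (\<Sum>i\<in>A. f i) b = (\<Sum>i\<in>A. outer (f i) b)"
  by (simp add: vec_eq_iff sum_distrib_right)
lemma outer_sum_right: "outer b (\<Sum>i\<in>A. f i) = (\<Sum>i\<in>A. outer b (f i))"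
  by (simp add: vec_eq_iff sum_distrib_left)

lemma outer_scale_anti: "outer (r *\<^sub>R a) a - outer a (r *\<^sub>R a) = 0"
  by (simp add: vec_eq_iff)

lemma sum_tlog:
  fixes c :: "real^('d::finite)" and v :: "nat \<Rightarrow> real^'d"
  assumes "(0, c, C) \<in> lie_g" and "\<forall>i<N. x i = texp (0, v i, 0)"
  shows "(\<Sum>i<N. tlog (tmul (tinv (texp (0, c, C))) (x i))) =
         (0, (\<Sum>i<N. v i) - real N *\<^sub>R c,
          - (real N *\<^sub>R C) + (1/2) *\<^sub>R (outer (\<Sum>i<N. v i) c - outer c (\<Sum>i<N. v i)))"
proof -
  have "(\<Sum>i<N. tlog (tmul (tinv (texp (0, c, C))) (x i))) =
        (\<Sum>i<N. (0::real, v i - c, -C + (1/2) *\<^sub>R (outer (v i) c - outer c (v i))))"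
  proof (intro sum.cong refl)
    fix i assume "i \<in> {..<N}"
    then show "tlog (tmul (tinv (texp (0, c, C))) (x i)) = (0::real, v i - c, -C + (1/2) *\<^sub>R (outer (v i) c - outer c (v i)))"
      using assms by (simp only: key_mul tlog_texp[OF key_in[OF assms(1)]] lessThan_iff)
  qed
  also have "\<dots> = (0, (\<Sum>i<N. v i) - real N *\<^sub>R c,
          - (real N *\<^sub>R C) + (1/2) *\<^sub>R (outer (\<Sum>i<N. v i) c - outer c (\<Sum>i<N. v i)))"
    by (simp only: prod_eq_iff fst_sum snd_sum fst_conv snd_conv sum_subtractf sum.distrib
        outer_sum_left outer_sum_right scaleR_sum_right[symmetric] sum_negf sum_constant_scaleR card_lessThan
        sum.neutral_const) simp
  finally show ?thesis .
qed

lemma bary_eq: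
  fixes v :: "nat \<Rightarrow> real^('d::finite)"
  assumes N: "N \<ge> 1" and x: "\<forall>i<N. x i = texp (0, v i, 0)"
  shows "bary N x = texp (0, (1 / real N) *\<^sub>R (\<Sum>i<N. v i), 0)"
proof -
  define vb where "vb = (1 / real N) *\<^sub>R (\<Sum>i<N. v i)"
  have S: "(\<Sum>i<N. v i) = real N *\<^sub>R vb" using N unfolding vb_def by simp
  have "(THE m. m \<in> grp \<and> (\<Sum>i<N. tlog (tmul (tinv m) (x i))) = 0) = texp (0, vb, 0)"
  proof (rule the_equality)
  show "texp (0, vb, 0) \<in> grp \<and> (\<Sum>i<N. tlog (tmul (tinv (texp (0, vb, 0))) (x i))) = 0"
  proof
    show "texp (0, vb, 0) \<in> grp" unfolding grp_def using vec_in by blast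
    show "(\<Sum>i<N. tlog (tmul (tinv (texp (0, vb, 0))) (x i))) = 0"
      unfolding sum_tlog[OF vec_in x] S outer_scale_anti
      by (simp add: zero_prod_def)
  qed
next
  fix m assume h: "m \<in> grp \<and> (\<Sum>i<N. tlog (tmul (tinv m) (x i))) = (0::'d tens)"
  then obtain z where z: "z \<in> lie_g" "m = texp z" unfolding grp_def by blast
  obtain c C where zc: "z = (0, c, C)" using lie_g_fst[OF z(1)] by (cases z) auto
  have "(0::real, (\<Sum>i<N. v i) - real N *\<^sub>R c,
          - (real N *\<^sub>R C) + (1/2) *\<^sub>R (outer (\<Sum>i<N. v i) c - outer c (\<Sum>i<N. v i))) = (0, 0, 0)"
    using h sum_tlog[OF z(1)[unfolded zc] x] unfolding z(2) zc by (simp only: zero_prod_def)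
  then have e1': "(\<Sum>i<N. v i) - real N *\<^sub>R c = 0"
    and e2: "- (real N *\<^sub>R C) + (1/2) *\<^sub>R (outer (\<Sum>i<N. v i) c - outer c (\<Sum>i<N. v i)) = 0"
    by (simp_all only: prod.inject)
  from e1' have e1: "(\<Sum>i<N. v i) = real N *\<^sub>R c" by simp
  have "outer (\<Sum>i<N. v i) c - outer c (\<Sum>i<N. v i) = 0"
    unfolding e1 by (simp add: vec_eq_iff)
  with e2 have "real N *\<^sub>R C = 0" by simp
  then have C0: "C = 0" using N by simp
  have "c = vb" using e1 N unfolding vb_def by simp
  then show "m = texp (0, vb, 0)" using z(2) zc C0 by simp
qed
  then show ?thesis unfolding vb_def bary_def .
qed


lemma one_minus_int: "((\<lambda>x::real. 1 - x) has_integral 1/2) {0<..<1}"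
proof -
  have "((\<lambda>x::real. 1 - x) has_integral ((\<lambda>x. x - x^2/2) 1 - (\<lambda>x. x - x^2/2) 0)) {0..1}"
    by (intro fundamental_theorem_of_calculus) (auto intro!: derivative_eq_intros simp: has_real_derivative_iff_has_vector_derivative[symmetric])
  then show ?thesis by (simp add: has_integral_Icc_iff_Ioo)
qed

lemma tri_emeasure:
  "emeasure lborel {p :: real \<times> real. 0 < fst p \<and> fst p < snd p \<and> snd p < 1} = ennreal (1/2)"
proof -
  let ?T = "{p :: real \<times> real. 0 < fst p \<and> fst p < snd p \<and> snd p < 1}"
  have Tb: "?T \<in> sets borel"
    by (intro borel_open open_Collect_conj open_Collect_less) (auto intro: continuous_intros)
  have Tm: "?T \<in> sets (lborel \<Otimes>\<^sub>M lborel)" using Tb by (simp only: lborel_prod sets_lborel)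
  have "emeasure lborel ?T = emeasure (lborel \<Otimes>\<^sub>M lborel) ?T" by (simp add: lborel_prod)
  also have "\<dots> = (\<integral>\<^sup>+x. emeasure lborel (Pair x -` ?T) \<partial>lborel)"
    by (rule lborel.emeasure_pair_measure_alt[OF Tm])
  also have "\<dots> = (\<integral>\<^sup>+x. ennreal (if x \<in> {0<..<1} then 1 - x else 0) \<partial>lborel)"
  proof (rule nn_integral_cong)
    fix x :: real
    show "emeasure lborel (Pair x -` ?T) = ennreal (if x \<in> {0<..<1} then 1 - x else 0)"
    proof (cases "x \<in> {0<..<1}")
      case True
      then have e: "Pair x -` ?T = {x<..<1}" by auto
      show ?thesis unfolding e using True by simp
    next
      case False
      then have e: "Pair x -` ?T = {}" by auto
      show ?thesis unfolding e using False by simp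
    qed
  qed
  also have "\<dots> = ennreal (1/2)"
  proof -
    have "((\<lambda>x::real. if x \<in> {0<..<1} then 1 - x else 0) has_integral 1/2) UNIV"
      by (rule has_integral_restrict_UNIV[THEN iffD2, OF one_minus_int])
    then have "integral\<^sup>N lborel (\<lambda>x::real. if x \<in> {0<..<1} then 1 - x else 0) = ennreal (1/2)"
      by (intro nn_integral_has_integral_lborel) auto
    then show ?thesis by simp
  qed
  finally show ?thesis .
qed

lemma tri_integral:
  "integral {p :: real \<times> real. 0 < fst p \<and> fst p < snd p \<and> snd p < 1} (\<lambda>p. 1::real) = 1/2"
proof -
  let ?T = "{p :: real \<times> real. 0 < fst p \<and> fst p < snd p \<and> snd p < 1}"
  have "((\<lambda>x. 1) has_integral measure lborel ?T) ?T"
    by (rule has_integral_measure_lborel)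
       (auto simp: tri_emeasure ennreal_less_top simp del: ennreal_half intro!: borel_open open_Collect_conj open_Collect_less continuous_intros)
  moreover have "measure lborel ?T = 1/2" unfolding measure_def tri_emeasure by (simp del: ennreal_half)
  ultimately show ?thesis by (simp add: integral_unique)
qed

lemma sig_lin:
  fixes X :: "real \<Rightarrow> real^('d::finite)"
  assumes "pl_path (Suc 0) X"
  shows "sig X = texp (0, X 1 - X 0, 0)"
proof -
  have "\<exists>t :: nat \<Rightarrow> real. t 0 = 0 \<and> t (Suc 0) = 1 \<and> (\<forall>k<Suc 0. t k \<le> t (Suc k)) \<and>
        (\<forall>k<Suc 0. \<exists>u v. \<forall>s\<in>{t k..t (Suc k)}. X s = u + s *\<^sub>R v)"
    using assms unfolding pl_path_def by blast
  then obtain t :: "nat \<Rightarrow> real" where t: "t 0 = 0" "t (Suc 0) = 1"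
    "\<forall>k<Suc 0. \<exists>u v. \<forall>s\<in>{t k..t (Suc k)}. X s = u + s *\<^sub>R v"
    by blast
  from t(3) have "\<exists>u v. \<forall>s\<in>{t 0..t (Suc 0)}. X s = u + s *\<^sub>R v" by blast
  then obtain u v where uv: "\<forall>s\<in>{0..1}. X s = u + s *\<^sub>R v"
    unfolding t(1,2) by blast
  have X10: "X 1 - X 0 = v" using uv by simp
  have der: "vector_derivative X (at s) = v" if s: "s \<in> {0<..<1}" for s
  proof -
    have "((\<lambda>s. u + s *\<^sub>R v) has_vector_derivative v) (at s)"
      by (auto intro!: derivative_eq_intros)
    then have "(X has_vector_derivative v) (at s)"
      by (rule has_vector_derivative_transform_within_open[where S="{0<..<1}"]) (use s uv in auto)
    then show ?thesis by (rule vector_derivative_at)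
  qed
  let ?T = "{p :: real \<times> real. 0 < fst p \<and> fst p < snd p \<and> snd p < 1}"
  have I: "integral ?T (\<lambda>p. vector_derivative X (at (fst p)) $ w1 * vector_derivative X (at (snd p)) $ w2)
        = v $ w1 * v $ w2 / 2" for w1 w2
  proof -
    have "integral ?T (\<lambda>p. vector_derivative X (at (fst p)) $ w1 * vector_derivative X (at (snd p)) $ w2)
        = integral ?T (\<lambda>p. (v $ w1 * v $ w2) * 1)"
      by (rule integral_cong) (simp add: der)
    also have "\<dots> = v $ w1 * v $ w2 / 2"
      by (simp only: integral_mult_right tri_integral)
    finally show ?thesis .
  qed
  show ?thesis
    unfolding sig_def texp0 X10 by (simp add: I vec_eq_iff)
qed

lemma lin_in_Lim: "texp (0, v, 0) \<in> (Lim (Suc 0) :: ('d::finite) tens set)"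
  for v :: "real^'d"
proof -
  let ?X = "\<lambda>s::real. s *\<^sub>R v"
  have p: "pl_path (Suc 0) ?X"
    unfolding pl_path_def
  proof (intro disjI2 conjI)
    show "\<exists>t :: nat \<Rightarrow> real. t 0 = 0 \<and> t (Suc 0) = 1 \<and> (\<forall>k<Suc 0. t k \<le> t (Suc k)) \<and>
        (\<forall>k<Suc 0. \<exists>u w. \<forall>s\<in>{t k..t (Suc k)}. ?X s = u + s *\<^sub>R w)"
    proof (rule exI[of _ real], intro conjI allI impI)
      fix k :: nat assume "k < Suc 0"
      show "\<exists>u w. \<forall>s\<in>{real k..real (Suc k)}. ?X s = u + s *\<^sub>R w"
        by (rule exI[where x=0], rule exI[where x=v]) simp
    qed auto
  qed simp
  have s: "sig ?X = texp (0, v, 0)" using sig_lin[OF p] by simp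
  show ?thesis unfolding Lim_def
    by (rule CollectI, rule exI[of _ ?X], rule conjI[OF s[symmetric] p])
qed

lemma Lim0:
  assumes "y \<in> Lim 0" shows "fst (snd y) = 0"
proof -
  obtain X where y: "y = sig X" and p: "pl_path 0 X" using assms unfolding Lim_def by blast
  from p have "\<forall>s\<in>{0..1}. X s = X 0" unfolding pl_path_def by blast
  then have "X 1 = X 0" by (rule bspec) simp
  then show ?thesis unfolding y sig_def snd_conv fst_conv by simp
qed



theorem proposition7p1:
  fixes N :: nat
  assumes "N \<ge> 1"
  shows "Bd2 TYPE('d::finite) N (\<lambda>_. 1) = 1"
proof -
  let ?S = "{bary N x | x. \<forall>i<N. x i \<in> Lim ((\<lambda>_. 1) i)} :: 'd tens set"
  have sub1: "?S \<subseteq> Lim 1"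
  proof
    fix y assume "y \<in> ?S"
    then obtain x where y: "y = bary N x" and x: "\<forall>i<N. x i \<in> (Lim 1 :: 'd tens set)" by auto
    have "\<forall>i<N. \<exists>v :: real^'d. x i = texp (0, v, 0)"
    proof (intro allI impI)
      fix i assume "i < N"
      then obtain X :: "real \<Rightarrow> real^'d" where "x i = sig X" "pl_path (Suc 0) X"
        using x unfolding Lim_def by auto
      then show "\<exists>v :: real^'d. x i = texp (0, v, 0)" using sig_lin[of X] by auto
    qed
    then obtain v :: "nat \<Rightarrow> real^'d" where v: "\<forall>i<N. x i = texp (0, v i, 0)"
      by metis
    show "y \<in> Lim 1" unfolding y bary_eq[OF assms v] using lin_in_Lim by simp
  qed
  have not0: "\<not> ?S \<subseteq> Lim 0"
  proof
    assume h: "?S \<subseteq> Lim 0"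
    define e :: "real^'d" where "e = axis undefined 1"
    have e0: "e \<noteq> 0" unfolding e_def by (simp add: axis_eq_0_iff)
    have v: "\<forall>i<N. (\<lambda>_. texp (0, e, 0)) i = texp (0, (\<lambda>_. e) i, 0)" by simp
    have "(\<lambda>_. texp (0, e, 0)) \<in> {x. \<forall>i<N. x i \<in> Lim ((\<lambda>_. 1) i)}"
      using lin_in_Lim[of e] by simp
    then have "bary N (\<lambda>_. texp (0, e, 0)) \<in> ?S" by blast
    then have "bary N (\<lambda>_. texp (0, e, 0)) \<in> Lim 0" using h by blast
    then have "fst (snd (bary N (\<lambda>_. texp (0, e, 0)))) = 0" by (rule Lim0)
    moreover have "bary N (\<lambda>_. texp (0, e, 0)) = texp (0, e, 0)"
      using bary_eq[OF assms v] assms by (simp add: sum_constant_scaleR del: sum_constant)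
    ultimately show False using e0 by (simp add: texp0)
  qed
  show ?thesis unfolding Bd2_def
  proof (rule Least_equality)
    show "?S \<subseteq> Lim 1" by (rule sub1)
  next
    fix m assume "{bary N x | x. \<forall>i<N. x i \<in> Lim ((\<lambda>_. 1) i)} \<subseteq> (Lim m :: 'd tens set)"
    then show "1 \<le> m" using not0 by (cases m) auto
  qed
qed
end
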